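(* Let $c,k$ be positive integers and let $Z$ be a multigraph in which every edge has multiplicity less than $c$. Let $\{A,B\}$ be a partition of $V(Z)$ such that each vertex of $A$ has edge-degree at least $k$ in $Z$, $B$ is an independent set of $Z$, and each vertex of $B$ has at least $2$ distinct neighbors in $Z$. Then $Z$ has a cluster collection $\mathcal{C}$ such that each vertex of $A$ belongs to exactly one cluster of $\mathcal{C}$, no cluster of $\mathcal{C}$ has more than $k+1$ vertices, and each vertex of $Z/\mathcal{C}$ has edge-degree at least $k/c$.
   Context: Graphs are finite multigraphs without loops; when contracting edges, multiplicities of parallel edges created are summed and loops are deleted. The edge-degree of a vertex is the number of edges (with multiplicity) incident to it. A cluster collection of $Z$ is a nonempty collection $\mathcal{C}$ of pairwise disjoint nonempty vertex sets each inducing a connected subgraph of $Z$; $Z/\mathcal{C}$ is the multigraph obtained from $Z[\bigcup\mathcal{C}]$ by contracting all edges inside each cluster of $\mathcal{C}$. *)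

theory Defs
  imports Complex_Main
begin

text \<open>A finite loopless multigraph on vertex set V, given by a symmetric
  multiplicity function m (number of parallel edges between two vertices).\<close>
definition multigraph :: "'a set \<Rightarrow> ('a \<Rightarrow> 'a \<Rightarrow> nat) \<Rightarrow> bool" where
  "multigraph V m \<longleftrightarrow> finite V \<and> (\<forall>u v. m u v = m v u) \<and> (\<forall>v. m v v = 0)
     \<and> (\<forall>u v. m u v > 0 \<longrightarrow> u \<in> V \<and> v \<in> V)"

definition edge_degree :: "'a set \<Rightarrow> ('a \<Rightarrow> 'a \<Rightarrow> nat) \<Rightarrow> 'a \<Rightarrow> nat" where
  "edge_degree V m v = (\<Sum>u\<in>V. m v u)"

definition neighbors :: "'a set \<Rightarrow> ('a \<Rightarrow> 'a \<Rightarrow> nat) \<Rightarrow> 'a \<Rightarrow> 'a set" where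
  "neighbors V m v = {u \<in> V. m v u > 0}"

definition independent_set :: "('a \<Rightarrow> 'a \<Rightarrow> nat) \<Rightarrow> 'a set \<Rightarrow> bool" where
  "independent_set m S \<longleftrightarrow> (\<forall>u\<in>S. \<forall>v\<in>S. m u v = 0)"

definition induces_connected :: "('a \<Rightarrow> 'a \<Rightarrow> nat) \<Rightarrow> 'a set \<Rightarrow> bool" where
  "induces_connected m X \<longleftrightarrow>
     (\<forall>x\<in>X. \<forall>y\<in>X. (x, y) \<in> {(u, v). u \<in> X \<and> v \<in> X \<and> m u v > 0}\<^sup>*)"

definition cluster_collection :: "'a set \<Rightarrow> ('a \<Rightarrow> 'a \<Rightarrow> nat) \<Rightarrow> 'a set set \<Rightarrow> bool" where
  "cluster_collection V m \<C> \<longleftrightarrow> \<C> \<noteq> {} \<and>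
     (\<forall>X\<in>\<C>. X \<noteq> {} \<and> X \<subseteq> V \<and> induces_connected m X) \<and>
     (\<forall>X\<in>\<C>. \<forall>Y\<in>\<C>. X \<noteq> Y \<longrightarrow> X \<inter> Y = {})"

text \<open>The contracted multigraph Z/C: vertex set C, multiplicity between distinct
  clusters X, Y is the number of edges of Z between X and Y; loops deleted.\<close>
definition contract_mult :: "('a \<Rightarrow> 'a \<Rightarrow> nat) \<Rightarrow> 'a set \<Rightarrow> 'a set \<Rightarrow> nat" where
  "contract_mult m X Y = (if X = Y then 0 else (\<Sum>x\<in>X. \<Sum>y\<in>Y. m x y))"

end

theory Submission
  imports Defs
begin

lemma greedy:
  assumes "finite F"
  shows "\<exists>f. (\<forall>b a. f b = Some a \<longrightarrow> b \<in> F \<and> a \<in> A \<and> m a b > (0::nat))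
     \<and> (\<forall>a. card {b\<in>F. f b = Some a} \<le> k)
     \<and> (\<forall>b\<in>F. f b = None \<longrightarrow> (\<forall>a\<in>A. m a b > 0 \<longrightarrow> card {b\<in>F. f b = Some a} \<ge> k))"
  using assms
proof (induction F rule: finite_induct)
  case empty show ?case by (rule exI[of _ "\<lambda>_. None"]) simp
next
  case (insert x F)
  then obtain f where f1: "\<forall>b a. f b = Some a \<longrightarrow> b \<in> F \<and> a \<in> A \<and> m a b > 0"
    and f2: "\<forall>a. card {b\<in>F. f b = Some a} \<le> k"
    and f3: "\<forall>b\<in>F. f b = None \<longrightarrow> (\<forall>a\<in>A. m a b > 0 \<longrightarrow> card {b\<in>F. f b = Some a} \<ge> k)" by blast
  have fx: "f x = None" using f1 insert.hyps(2) by (cases "f x") auto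
  have same: "{b\<in>insert x F. f b = Some a} = {b\<in>F. f b = Some a}" for a using fx by auto
  have fin: "finite {b\<in>F. f b = Some a}" for a using insert.hyps(1) by simp
  show ?case
  proof (cases "\<exists>a\<in>A. m a x > 0 \<and> card {b\<in>F. f b = Some a} < k")
    case True
    then obtain a0 where a0: "a0\<in>A" "m a0 x > 0" "card {b\<in>F. f b = Some a0} < k" by blast
    define g where "g = f(x := Some a0)"
    have g_set: "{b\<in>insert x F. g b = Some a} = (if a = a0 then insert x {b\<in>F. f b = Some a} else {b\<in>F. f b = Some a})" for a
      using insert.hyps(2) by (auto simp: g_def)
    have card_g: "card {b\<in>insert x F. g b = Some a} = (if a = a0 then Suc (card {b\<in>F. f b = Some a}) else card {b\<in>F. f b = Some a})" for a
      unfolding g_set using fin insert.hyps(2) by simp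
    show ?thesis
    proof -
      have P1: "\<forall>b a. g b = Some a \<longrightarrow> b \<in> insert x F \<and> a \<in> A \<and> m a b > 0" using f1 a0 by (auto simp: g_def split: if_splits)
      have P2: "card {b\<in>insert x F. g b = Some a} \<le> k" for a using card_g[of a] f2 a0(3) by auto
      have P3: "card {b\<in>insert x F. g b = Some a} \<ge> k" if "b \<in> insert x F" "g b = None" "a \<in> A" "m a b > 0" for a b
      proof -
      from that have "b \<in> F" "f b = None" by (auto simp: g_def split: if_splits)
      then have "card {b\<in>F. f b = Some a} \<ge> k" using f3 \<open>a \<in> A\<close> \<open>m a b > 0\<close> by blast
      then show ?thesis using card_g[of a] by auto
      qed
      have P3': "\<forall>b\<in>insert x F. g b = None \<longrightarrow> (\<forall>a\<in>A. m a b > 0 \<longrightarrow> card {b\<in>insert x F. g b = Some a} \<ge> k)"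
        by (intro ballI impI) (rule P3)
      have P2': "\<forall>a. card {b\<in>insert x F. g b = Some a} \<le> k" using P2 by blast
      show ?thesis by (rule exI[of _ g]) (intro conjI P1 P2' P3')
    qed
  next
    case False
    show ?thesis
    proof -
      have P3: "card {b\<in>F. f b = Some a} \<ge> k" if "b \<in> insert x F" "f b = None" "a \<in> A" "m a b > 0" for a b
      proof (cases "b = x")
        case True
        then show ?thesis using False that by (auto simp add: not_less)
      next
        case False
        then have "b \<in> F" using that by simp
        then show ?thesis using that f3 by blast
      qed
      have P3': "\<forall>b\<in>insert x F. f b = None \<longrightarrow> (\<forall>a\<in>A. m a b > 0 \<longrightarrow> card {b\<in>F. f b = Some a} \<ge> k)"
        by (intro ballI impI) (rule P3)
      have P1': "\<forall>b a. f b = Some a \<longrightarrow> b \<in> insert x F \<and> a \<in> A \<and> m a b > 0" using f1 by blast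
      show ?thesis by (rule exI[of _ f]) (unfold same, intro conjI P1' f2 P3')
    qed
  qed
qed

theorem lemma1:
  fixes V :: "'a set" and m :: "'a \<Rightarrow> 'a \<Rightarrow> nat" and c k :: nat and A B :: "'a set"
  assumes "multigraph V m"
    and "V \<noteq> {}"
    and "c > 0" and "k > 0"
    and "\<forall>u v. m u v < c"
    and "A \<union> B = V" and "A \<inter> B = {}"
    and "\<forall>a\<in>A. edge_degree V m a \<ge> k"
    and "independent_set m B"
    and "\<forall>b\<in>B. card (neighbors V m b) \<ge> 2"
  shows "\<exists>\<C>. cluster_collection V m \<C>
            \<and> (\<forall>a\<in>A. \<exists>!X. X \<in> \<C> \<and> a \<in> X)
            \<and> (\<forall>X\<in>\<C>. card X \<le> k + 1)
            \<and> (\<forall>X\<in>\<C>. real (edge_degree \<C> (contract_mult m) X) \<ge> real k / real c)"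
proof -
  have finV: "finite V" and msym: "\<And>u v. m u v = m v u" and mloop: "\<And>v. m v v = 0"
    and msupp: "\<And>u v. m u v > 0 \<Longrightarrow> u \<in> V \<and> v \<in> V"
    using assms(1) unfolding multigraph_def by auto
  have finA: "finite A" and finB: "finite B" using finV assms(6) by auto
  have AV: "A \<subseteq> V" and BV: "B \<subseteq> V" using assms(6) by auto
  have indep: "\<And>u v. u \<in> B \<Longrightarrow> v \<in> B \<Longrightarrow> m u v = 0"
    using assms(9) unfolding independent_set_def by auto
  have nbr: "\<exists>a'\<in>A. a' \<noteq> a \<and> m b a' > 0" if "b \<in> B" for b a
  proof -
    have "card (neighbors V m b) \<ge> 2" using assms(10) that by auto
    moreover have "finite (neighbors V m b)" using finV unfolding neighbors_def by auto
    ultimately have "\<not> neighbors V m b \<subseteq> {a}"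
    proof -
      have "card (neighbors V m b) \<le> 1" if "neighbors V m b \<subseteq> {a}"
        using card_mono[OF _ that] by simp
      then show ?thesis using \<open>card (neighbors V m b) \<ge> 2\<close> by linarith
    qed
    then obtain u where u: "u \<in> neighbors V m b" "u \<noteq> a" by blast
    then have "u \<in> V" "m b u > 0" unfolding neighbors_def by auto
    then have "u \<in> A" using indep[OF that] assms(6) by (metis Un_iff less_irrefl)
    then show ?thesis using u \<open>m b u > 0\<close> by blast
  qed
  have A_ne: "A \<noteq> {}"
  proof
    assume "A = {}"
    then obtain b where "b \<in> B" using assms(2,6) by auto
    then show False using nbr[of b b] \<open>A = {}\<close> by auto
  qed
  obtain f where fall: "(\<forall>b a. f b = Some a \<longrightarrow> b \<in> B \<and> a \<in> A \<and> m a b > 0)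
     \<and> (\<forall>a. card {b\<in>B. f b = Some a} \<le> k)
     \<and> (\<forall>b\<in>B. f b = None \<longrightarrow> (\<forall>a\<in>A. m a b > 0 \<longrightarrow> card {b\<in>B. f b = Some a} \<ge> k))"
    using greedy[OF finB, of A m k] by (elim exE) (rule that)
  have fA: "\<forall>b a. f b = Some a \<longrightarrow> b \<in> B \<and> a \<in> A \<and> m a b > 0" using fall by (rule conjunct1)
  have fk: "\<forall>a. card {b\<in>B. f b = Some a} \<le> k" using fall by (elim conjE)
  have fsat: "\<forall>b\<in>B. f b = None \<longrightarrow> (\<forall>a\<in>A. m a b > 0 \<longrightarrow> card {b\<in>B. f b = Some a} \<ge> k)"
    using fall by (elim conjE)
  define S where "S a = {b\<in>B. f b = Some a}" for a
  define Xf where "Xf a = insert a (S a)" for a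
  define C where "C = Xf ` A"
  have SB: "S a \<subseteq> B" for a unfolding S_def by auto
  have finS: "finite (S a)" for a using SB finB finite_subset by blast
  have finX: "finite (Xf a)" for a using finS unfolding Xf_def by auto
  have notB: "a \<in> A \<Longrightarrow> a \<notin> B" for a using assms(7) by auto
  have aS: "a \<in> A \<Longrightarrow> a \<notin> S a'" for a a' using SB notB by blast
  have XV: "a \<in> A \<Longrightarrow> Xf a \<subseteq> V" for a using AV BV SB unfolding Xf_def by auto
  have Xinj: "a = a'" if "a \<in> A" "a' \<in> A" "a \<in> Xf a'" for a a'
    using that aS unfolding Xf_def by auto
  have inj: "inj_on Xf A"
    by (rule inj_onI) (metis Xf_def Xinj insertI1)
  have disj: "Xf a \<inter> Xf a' = {}" if "a \<in> A" "a' \<in> A" "a \<noteq> a'" for a a'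
    using that aS unfolding Xf_def S_def by auto
  have Sm: "m a b > 0" if "b \<in> S a" for a b using that fA unfolding S_def by auto
  have conn: "induces_connected m (Xf a)" for a
  proof -
    let ?R = "{(u, v). u \<in> Xf a \<and> v \<in> Xf a \<and> m u v > 0}"
    have toa: "(x, a) \<in> ?R\<^sup>*" if "x \<in> Xf a" for x
    proof (cases "x = a")
      case False
      then have "x \<in> S a" using that unfolding Xf_def by auto
      then have "(x, a) \<in> ?R" using Sm[of x a] msym[of a x] unfolding Xf_def by simp
      then show ?thesis by (rule r_into_rtrancl)
    qed auto
    have froma: "(a, x) \<in> ?R\<^sup>*" if "x \<in> Xf a" for x
    proof (cases "x = a")
      case False
      then have "x \<in> S a" using that unfolding Xf_def by auto
      then have "(a, x) \<in> ?R" using Sm[of x a] unfolding Xf_def by simp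
      then show ?thesis by (rule r_into_rtrancl)
    qed auto
    show ?thesis unfolding induces_connected_def
    proof (intro ballI)
      fix x y assume "x \<in> Xf a" "y \<in> Xf a"
      show "(x, y) \<in> ?R\<^sup>*" by (rule rtrancl_trans[OF toa[OF \<open>x \<in> Xf a\<close>] froma[OF \<open>y \<in> Xf a\<close>]])
    qed
  qed
  have cc: "cluster_collection V m C"
  proof -
    have "C \<noteq> {}" using A_ne unfolding C_def by simp
    moreover have "\<forall>X\<in>C. X \<noteq> {} \<and> X \<subseteq> V \<and> induces_connected m X"
      unfolding C_def using XV conn by (auto simp: Xf_def)
    moreover have "\<forall>X\<in>C. \<forall>Y\<in>C. X \<noteq> Y \<longrightarrow> X \<inter> Y = {}"
      unfolding C_def using disj by auto
    ultimately show ?thesis unfolding cluster_collection_def by (intro conjI)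
  qed
  have uniq: "\<exists>!X. X \<in> C \<and> a \<in> X" if "a \<in> A" for a
  proof (rule ex1I[of _ "Xf a"])
    show "Xf a \<in> C \<and> a \<in> Xf a" using that unfolding C_def Xf_def by auto
  next
    fix Y assume "Y \<in> C \<and> a \<in> Y"
    then obtain a' where "a' \<in> A" "Y = Xf a'" "a \<in> Xf a'" unfolding C_def by auto
    then show "Y = Xf a" using Xinj that by auto
  qed
  have cardX: "card (Xf a) \<le> k + 1" for a
  proof -
    have "card (Xf a) \<le> Suc (card (S a))" unfolding Xf_def using finS by (simp add: card_insert_if)
    then show ?thesis using fk unfolding S_def by (metis Suc_eq_plus1 add_le_mono1 le_trans)
  qed
  have deg: "real k / real c \<le> real (edge_degree C (contract_mult m) (Xf a))" if aA: "a \<in> A" for a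
  proof -
    define T where "T = (\<Sum>a'\<in>A-{a}. \<Sum>x\<in>Xf a. \<Sum>y\<in>Xf a'. m x y)"
    have "edge_degree C (contract_mult m) (Xf a) = (\<Sum>a'\<in>A. contract_mult m (Xf a) (Xf a'))"
      unfolding edge_degree_def C_def using sum.reindex[OF inj] by simp
    also have "\<dots> = contract_mult m (Xf a) (Xf a) + (\<Sum>a'\<in>A-{a}. contract_mult m (Xf a) (Xf a'))"
      using sum.remove[OF finA aA] by simp
    also have "\<dots> = T"
    proof -
      have "contract_mult m (Xf a) (Xf a') = (\<Sum>x\<in>Xf a. \<Sum>y\<in>Xf a'. m x y)" if "a' \<in> A - {a}" for a'
      proof -
        have "Xf a \<noteq> Xf a'" using that aA inj_onD[OF inj, of a a'] by auto
        then show ?thesis unfolding contract_mult_def by simp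
      qed
      then show ?thesis unfolding T_def by (simp add: contract_mult_def)
    qed
    finally have Teq: "edge_degree C (contract_mult m) (Xf a) = T" .
    define W where "W = (\<Union>a'\<in>A-{a}. Xf a')"
    have sumW: "(\<Sum>y\<in>W. m a y) = (\<Sum>a'\<in>A-{a}. \<Sum>y\<in>Xf a'. m a y)"
      unfolding W_def
      by (rule sum.UNION_disjoint) (use finA finX disj in auto)
    have per: "(\<Sum>x\<in>Xf a. \<Sum>y\<in>Xf a'. m x y) \<ge> (\<Sum>y\<in>Xf a'. m a y) + (\<Sum>x\<in>S a. m x a')" for a'
    proof -
      have "(\<Sum>x\<in>Xf a. \<Sum>y\<in>Xf a'. m x y) = (\<Sum>y\<in>Xf a'. m a y) + (\<Sum>x\<in>S a. \<Sum>y\<in>Xf a'. m x y)"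
        unfolding Xf_def[of a] using aS[OF aA] finS by simp
      moreover have "(\<Sum>x\<in>S a. m x a') \<le> (\<Sum>x\<in>S a. \<Sum>y\<in>Xf a'. m x y)"
        by (rule sum_mono) (rule member_le_sum, auto simp: Xf_def finS)
      ultimately show ?thesis by simp
    qed
    have "T \<ge> (\<Sum>a'\<in>A-{a}. (\<Sum>y\<in>Xf a'. m a y) + (\<Sum>x\<in>S a. m x a'))"
      unfolding T_def by (rule sum_mono) (rule per)
    also have "(\<Sum>a'\<in>A-{a}. (\<Sum>y\<in>Xf a'. m a y) + (\<Sum>x\<in>S a. m x a'))
       = (\<Sum>y\<in>W. m a y) + (\<Sum>x\<in>S a. \<Sum>a'\<in>A-{a}. m x a')"
      unfolding sumW sum.distrib by (simp add: sum.swap[of _ "S a"])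
    finally have T1: "T \<ge> (\<Sum>y\<in>W. m a y) + (\<Sum>x\<in>S a. \<Sum>a'\<in>A-{a}. m x a')" .
    have "(\<Sum>x\<in>S a. \<Sum>a'\<in>A-{a}. m x a') \<ge> (\<Sum>x\<in>S a. 1)"
    proof (rule sum_mono)
      fix x assume "x \<in> S a"
      then obtain a' where a': "a' \<in> A" "a' \<noteq> a" "m x a' > 0" using nbr SB by blast
      have "m x a' \<le> (\<Sum>a'\<in>A-{a}. m x a')" by (rule member_le_sum) (use a' finA in auto)
      then show "1 \<le> (\<Sum>a'\<in>A-{a}. m x a')" using a' by linarith
    qed
    then have T2: "T \<ge> (\<Sum>y\<in>W. m a y) + card (S a)" using T1 by simp
    have key: "k \<le> c * T"
    proof (cases "\<exists>b\<in>B. f b = None \<and> m a b > 0")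
      case True
      then have "card (S a) \<ge> k" using fsat aA unfolding S_def by blast
      then have "k \<le> T" using T2 by linarith
      also have "T \<le> c * T" using assms(3) by simp
      finally show ?thesis .
    next
      case False
      have WV: "W \<subseteq> V" unfolding W_def using XV by auto
      have SV: "S a \<subseteq> V" using SB BV by auto
      have zero: "m a y = 0" if "y \<in> V - (W \<union> S a)" for y
      proof (rule ccontr)
        assume "m a y \<noteq> 0"
        then have pos: "m a y > 0" by simp
        have "y \<noteq> a" using mloop pos by auto
        show False
        proof (cases "y \<in> A")
          case True
          then have "y \<in> Xf y" unfolding Xf_def by auto
          then have "y \<in> W" unfolding W_def using True \<open>y \<noteq> a\<close> by auto
          then show False using that by auto
        next
          case yA: False
          then have yB: "y \<in> B" using that assms(6) by auto
          then obtain a' where fy: "f y = Some a'" using False pos by auto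
          then have a'A: "a' \<in> A" using fA by auto
          show False
          proof (cases "a' = a")
            case True then have "y \<in> S a" using fy yB unfolding S_def by auto
            then show False using that by auto
          next
            case False
            then have "y \<in> Xf a'" using fy yB unfolding Xf_def S_def by auto
            then have "y \<in> W" unfolding W_def using False a'A by auto
            then show False using that by auto
          qed
        qed
      qed
      have "k \<le> (\<Sum>y\<in>V. m a y)" using assms(8) aA unfolding edge_degree_def by auto
      also have "(\<Sum>y\<in>V. m a y) = (\<Sum>y\<in>W \<union> S a. m a y)"
        by (rule sum.mono_neutral_right) (use finV WV SV zero in auto)
      also have "\<dots> \<le> (\<Sum>y\<in>W. m a y) + (\<Sum>y\<in>S a. m a y)"
        using sum_Un_nat[OF finite_subset[OF WV finV] finS[of a], of "m a"] by linarith
      also have "(\<Sum>y\<in>S a. m a y) \<le> card (S a) * c"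
        using sum_bounded_above[of "S a" "m a" c] assms(5) less_imp_le by auto
      finally have k1: "k \<le> (\<Sum>y\<in>W. m a y) + card (S a) * c" by simp
      have "(\<Sum>y\<in>W. m a y) \<le> c * (\<Sum>y\<in>W. m a y)" using assms(3) by simp
      then have "k \<le> c * ((\<Sum>y\<in>W. m a y) + card (S a))" using k1 unfolding add_mult_distrib2 by (simp only: mult.commute[of c])
      also have "\<dots> \<le> c * T" using T2 by simp
      finally show ?thesis .
    qed
    have "real k \<le> real T * real c" using key by (metis of_nat_le_iff of_nat_mult mult.commute)
    then show ?thesis unfolding Teq using assms(3) by (simp add: pos_divide_le_eq)
  qed
  show ?thesis
  proof (rule exI[of _ C], intro conjI)
    show "cluster_collection V m C" by (rule cc)
    show "\<forall>a\<in>A. \<exists>!X. X \<in> C \<and> a \<in> X" using uniq by blast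
    show "\<forall>X\<in>C. card X \<le> k + 1" using cardX unfolding C_def by blast
    show "\<forall>X\<in>C. real k / real c \<le> real (edge_degree C (contract_mult m) X)"
      using deg unfolding C_def by blast
  qed
qed

end
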